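(* Let $\gamma>0$ and $r,k\in\mathbb{N}$ with $2\leq k\leq r$ and $r^*:=r/k\in\mathbb{N}$. Let $J_1$ be the complete $(r^*+1)$-partite graph with $r^*$ parts of size $k$ and one part of size $1$, with distinguished vertices $w_1$ (the unique vertex of the part of size $1$) and $w_2$ (a vertex in one of the parts of size $k$). Let $H_1$ be the graph obtained from $J_1$ by deleting the edge $w_1w_2$, with distinguished ordered pair $(w_1,w_2)$, and let $H_1'$ be the same graph with the roles of the distinguished vertices switched, i.e. with distinguished ordered pair $(w_2,w_1)$. Let $\bm{H_1}:=(H_1,H_1')$. Then there exists $\beta_1=\beta_1(r,k,\gamma)>0$ such that for all sufficiently large $n$ and every $n$-vertex graph $G$ with $\delta(G)\geq(1-\frac{k}{r}+\gamma)n$, every pair of distinct vertices of $G$ is $(\bm{H_1};\beta_1)$-reachable.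
   Context: Let $\bm{H}=(H^1,\dots,H^t)$ be a vector of $(r+1)$-vertex graphs, each $H^i$ with an ordered pair of distinct distinguished vertices $(w_1^i,w_2^i)$. An $\bm{H}$-path is the graph obtained by taking vertex-disjoint copies of $H^1,\dots,H^t$ and identifying $w_2^i$ with $w_1^{i+1}$ for each $i\in[t-1]$; its endpoints are $w_1^1$ and $w_2^t$. Two vertices $x,y$ of an $n$-vertex graph $G$ are $(\bm{H};\beta)$-reachable if there are at least $\beta n^{tr-1}$ distinct labelled embeddings (injective maps sending edges to edges) of the $\bm{H}$-path into $G$ such that the endpoints of the path are mapped to $\{x,y\}$. *)

theory Defs
  imports Complex_Main "HOL-Library.FuncSet"
begin

definition simple_graph :: "'a set \<Rightarrow> ('a \<Rightarrow> 'a \<Rightarrow> bool) \<Rightarrow> bool" where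
  "simple_graph V E \<longleftrightarrow> finite V \<and>
     (\<forall>u v. E u v \<longrightarrow> u \<in> V \<and> v \<in> V \<and> u \<noteq> v \<and> E v u)"

definition degree :: "'a set \<Rightarrow> ('a \<Rightarrow> 'a \<Rightarrow> bool) \<Rightarrow> 'a \<Rightarrow> nat" where
  "degree V E v = card {u \<in> V. E v u}"

text \<open>An (r+1)-vertex graph on vertex set {0..r} with an ordered pair of
  distinguished vertices (rw1, rw2).\<close>
record rgraph =
  rw1 :: nat
  rw2 :: nat
  radj :: "nat \<Rightarrow> nat \<Rightarrow> bool"

text \<open>H-path for a list Hs = [H^1,...,H^t] of rooted graphs on {0..r}:
  disjoint copies (i,v), i < t, v \<le> r, where the copy of w_1 in H^{i+1}
  (i.e. (i, rw1 (Hs!i)) for i > 0) is identified with the copy of w_2 in H^i.\<close>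
definition hpath_rep :: "rgraph list \<Rightarrow> nat \<times> nat \<Rightarrow> nat \<times> nat" where
  "hpath_rep Hs p = (case p of (i, v) \<Rightarrow>
     if 0 < i \<and> v = rw1 (Hs ! i) then (i - 1, rw2 (Hs ! (i - 1))) else (i, v))"

definition hpath_verts :: "rgraph list \<Rightarrow> nat \<Rightarrow> (nat \<times> nat) set" where
  "hpath_verts Hs r = {(i, v). i < length Hs \<and> v \<le> r \<and> \<not> (0 < i \<and> v = rw1 (Hs ! i))}"

definition hpath_edge :: "rgraph list \<Rightarrow> nat \<Rightarrow> nat \<times> nat \<Rightarrow> nat \<times> nat \<Rightarrow> bool" where
  "hpath_edge Hs r a b \<longleftrightarrow> (\<exists>i < length Hs. \<exists>u \<le> r. \<exists>v \<le> r.
      radj (Hs ! i) u v \<and> a = hpath_rep Hs (i, u) \<and> b = hpath_rep Hs (i, v))"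

definition hpath_end1 :: "rgraph list \<Rightarrow> nat \<times> nat" where
  "hpath_end1 Hs = (0, rw1 (Hs ! 0))"

definition hpath_end2 :: "rgraph list \<Rightarrow> nat \<times> nat" where
  "hpath_end2 Hs = (length Hs - 1, rw2 (Hs ! (length Hs - 1)))"

definition hpath_embeddings ::
  "'a set \<Rightarrow> ('a \<Rightarrow> 'a \<Rightarrow> bool) \<Rightarrow> rgraph list \<Rightarrow> nat \<Rightarrow> 'a \<Rightarrow> 'a \<Rightarrow> ((nat \<times> nat) \<Rightarrow> 'a) set" where
  "hpath_embeddings V E Hs r x y =
     {\<phi> \<in> hpath_verts Hs r \<rightarrow>\<^sub>E V. inj_on \<phi> (hpath_verts Hs r) \<and>
        (\<forall>a b. hpath_edge Hs r a b \<longrightarrow> E (\<phi> a) (\<phi> b)) \<and>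
        {\<phi> (hpath_end1 Hs), \<phi> (hpath_end2 Hs)} = {x, y}}"

definition reachable ::
  "'a set \<Rightarrow> ('a \<Rightarrow> 'a \<Rightarrow> bool) \<Rightarrow> rgraph list \<Rightarrow> nat \<Rightarrow> real \<Rightarrow> 'a \<Rightarrow> 'a \<Rightarrow> bool" where
  "reachable V E Hs r \<beta> x y \<longleftrightarrow>
     real (card (hpath_embeddings V E Hs r x y)) \<ge> \<beta> * real (card V) ^ (length Hs * r - 1)"

text \<open>J_1: vertex 0 is the part of size 1 (w_1); vertices 1..r form r/k parts of
  size k, vertex i belonging to part Suc ((i-1) div k); w_2 = vertex 1.\<close>
definition J1_part :: "nat \<Rightarrow> nat \<Rightarrow> nat" where
  "J1_part k i = (if i = 0 then 0 else Suc ((i - 1) div k))"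

definition J1_adj :: "nat \<Rightarrow> nat \<Rightarrow> nat \<Rightarrow> nat \<Rightarrow> bool" where
  "J1_adj r k u v \<longleftrightarrow> u \<le> r \<and> v \<le> r \<and> J1_part k u \<noteq> J1_part k v"

definition H1_adj :: "nat \<Rightarrow> nat \<Rightarrow> nat \<Rightarrow> nat \<Rightarrow> bool" where
  "H1_adj r k u v \<longleftrightarrow> J1_adj r k u v \<and> {u, v} \<noteq> {0, 1}"

definition H1 :: "nat \<Rightarrow> nat \<Rightarrow> rgraph" where
  "H1 r k = \<lparr>rw1 = 0, rw2 = 1, radj = H1_adj r k\<rparr>"

definition H1' :: "nat \<Rightarrow> nat \<Rightarrow> rgraph" where
  "H1' r k = \<lparr>rw1 = 1, rw2 = 0, radj = H1_adj r k\<rparr>"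

end

theory Submission
  imports Defs
begin


definition vld :: "'a set \<Rightarrow> ('a\<Rightarrow>'a\<Rightarrow>bool) \<Rightarrow> (nat \<Rightarrow> 'a set) \<Rightarrow> (nat\<times>nat) set \<Rightarrow> ((nat\<times>nat) \<Rightarrow> 'a) set" where
"vld V E W D = {f \<in> D \<rightarrow>\<^sub>E V. (\<forall>p\<in>D. f p \<in> W (fst p)) \<and> (\<forall>p\<in>D. \<forall>q\<in>D. fst p \<noteq> fst q \<longrightarrow> E (f p) (f q))}"

definition Gs :: "'a set \<Rightarrow> ('a\<Rightarrow>'a\<Rightarrow>bool) \<Rightarrow> (nat \<Rightarrow> 'a set) \<Rightarrow> (nat\<times>nat) set \<Rightarrow> nat \<Rightarrow> ((nat\<times>nat) \<Rightarrow> 'a) \<Rightarrow> 'a set" where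
"Gs V E W D i h = {u\<in>V. u \<in> W i \<and> (\<forall>q\<in>D. E u (h q))}"

lemma finite_vld: "finite D \<Longrightarrow> finite V \<Longrightarrow> finite (vld V E W D)"
  unfolding vld_def by (rule finite_subset[of _ "D \<rightarrow>\<^sub>E V"]) (auto intro: finite_PiE)

lemma card_vld_le: "finite D \<Longrightarrow> finite V \<Longrightarrow> card (vld V E W D) \<le> card V ^ card D"
proof -
  assume a: "finite D" "finite V"
  have "card (vld V E W D) \<le> card (D \<rightarrow>\<^sub>E V)"
    unfolding vld_def by (rule card_mono) (use a in \<open>auto intro: finite_PiE\<close>)
  also have "\<dots> = card V ^ card D" using a by (simp add: card_PiE)
  finally show ?thesis .
qed

lemma decomp:
  assumes fD: "finite D" and fB: "finite B" and fV: "finite V"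
    and Di: "\<forall>p\<in>D. fst p \<noteq> i" and sym: "\<forall>u v. E u v \<longrightarrow> E v u"
  shows "card (vld V E W (D \<union> {i}\<times>B)) = (\<Sum>h\<in>vld V E W D. card (Gs V E W D i h) ^ card B)"
proof -
  let ?L = "vld V E W (D \<union> {i}\<times>B)"
  let ?R = "Sigma (vld V E W D) (\<lambda>h. B \<rightarrow>\<^sub>E Gs V E W D i h)"
  define F where "F = (\<lambda>f::(nat\<times>nat)\<Rightarrow>'a. (restrict f D, \<lambda>b\<in>B. f (i,b)))"
  define G where "G = (\<lambda>(h::(nat\<times>nat)\<Rightarrow>'a, \<phi>::nat\<Rightarrow>'a). (\<lambda>p. if p \<in> D then h p else if p \<in> {i}\<times>B then \<phi> (snd p) else undefined))"
  have "bij_betw F ?L ?R"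
  proof (rule bij_betw_byWitness[where f'=G])
    show "\<forall>a\<in>?L. G (F a) = a"
      by (auto simp: F_def G_def vld_def PiE_def extensional_def fun_eq_iff)
    show "\<forall>a\<in>?R. F (G a) = a"
      using Di by (auto simp: F_def G_def vld_def PiE_def extensional_def fun_eq_iff)
    show "F ` ?L \<subseteq> ?R"
      using Di sym apply (auto simp: F_def vld_def Gs_def PiE_def extensional_def)
       apply (metis UnI1 fst_conv)
      by (metis SigmaI UnI2 fst_conv singletonI)
    show "G ` ?R \<subseteq> ?L"
    proof
      fix z assume "z \<in> G ` ?R"
      then obtain h \<phi> where z: "z = G (h, \<phi>)" and h: "h \<in> vld V E W D" and ph: "\<phi> \<in> B \<rightarrow>\<^sub>E Gs V E W D i h"
        by auto
      have ph': "\<And>b. b \<in> B \<Longrightarrow> \<phi> b \<in> V \<and> \<phi> b \<in> W i \<and> (\<forall>q\<in>D. E (\<phi> b) (h q))"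
        using ph by (auto simp: Gs_def)
      have h': "h \<in> D \<rightarrow> V" "\<forall>p\<in>D. h p \<in> W (fst p)" "\<forall>p\<in>D. \<forall>q\<in>D. fst p \<noteq> fst q \<longrightarrow> E (h p) (h q)"
        using h by (auto simp: vld_def)
      have iD: "\<And>b. (i,b) \<notin> D" using Di by force
      let ?g = "\<lambda>p. if p \<in> D then h p else if p \<in> {i}\<times>B then \<phi> (snd p) else undefined"
      have 1: "?g \<in> (D \<union> {i}\<times>B) \<rightarrow>\<^sub>E V" using ph' h'(1) by (auto simp: PiE_def extensional_def)
      have 2: "\<forall>p\<in>D \<union> {i}\<times>B. ?g p \<in> W (fst p)" using ph' h'(2) iD by auto
      have 3: "\<forall>p\<in>D \<union> {i}\<times>B. \<forall>q\<in>D \<union> {i}\<times>B. fst p \<noteq> fst q \<longrightarrow> E (?g p) (?g q)"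
      proof (intro ballI impI)
        fix p q assume p: "p \<in> D \<union> {i}\<times>B" and q: "q \<in> D \<union> {i}\<times>B" and pq: "fst p \<noteq> fst q"
        show "E (?g p) (?g q)"
        proof (cases "p \<in> D")
          case True
          then show ?thesis
          proof (cases "q \<in> D")
            case True with \<open>p \<in> D\<close> pq h'(3) show ?thesis by auto
          next
            case False with q \<open>p \<in> D\<close> ph' sym show ?thesis by auto
          qed
        next
          case False
          then have "q \<in> D" using p q pq by auto
          with False p ph' show ?thesis by auto
        qed
      qed
      show "z \<in> ?L" unfolding vld_def z G_def using 1 2 3 by simp
    qed
  qed
  then have "card ?L = card ?R" by (rule bij_betw_same_card)
  also have "\<dots> = (\<Sum>h\<in>vld V E W D. card (B \<rightarrow>\<^sub>E Gs V E W D i h))"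
    by (rule card_SigmaI) (auto intro!: finite_vld finite_PiE fD fB fV simp: Gs_def)
  also have "\<dots> = (\<Sum>h\<in>vld V E W D. card (Gs V E W D i h) ^ card B)"
    using fB by (simp add: card_PiE)
  finally show ?thesis .
qed

lemma markov:
  fixes g :: "'b \<Rightarrow> nat" and N S s :: nat and c :: real
  assumes fX: "finite X" and N: "N > 0" and c: "c > 0" and s: "s \<ge> 1"
    and gN: "\<forall>h\<in>X. g h \<le> N" and cX: "card X \<le> N ^ S"
    and sg: "real (\<Sum>h\<in>X. g h) \<ge> c * real N ^ (S+1)"
  shows "real (\<Sum>h\<in>X. g h ^ s) \<ge> (c/2)^(s+1) * real N ^ (S+s)"
proof -
  define Gd where "Gd = {h\<in>X. real (g h) \<ge> c/2 * real N}"
  have fG: "finite Gd" using fX by (simp add: Gd_def)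
  have GX: "Gd \<subseteq> X" by (auto simp: Gd_def)
  have "real (\<Sum>h\<in>X. g h) = (\<Sum>h\<in>Gd. real (g h)) + (\<Sum>h\<in>X-Gd. real (g h))"
    using fX GX by (simp add: sum.subset_diff[of Gd X] algebra_simps)
  also have "(\<Sum>h\<in>Gd. real (g h)) \<le> (\<Sum>h\<in>Gd. real N)"
    by (rule sum_mono) (use gN GX in auto)
  also have "(\<Sum>h\<in>X-Gd. real (g h)) \<le> (\<Sum>h\<in>X-Gd. c/2 * real N)"
    by (rule sum_mono) (auto simp: Gd_def)
  also have "(\<Sum>h\<in>X-Gd. c/2 * real N) = real (card (X-Gd)) * (c/2 * real N)" by simp
  also have "\<dots> \<le> real (card X) * (c/2 * real N)"
    using fX c by (intro mult_right_mono) (auto intro: card_mono)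
  also have "\<dots> \<le> real N ^ S * (c/2 * real N)"
    using cX c by (intro mult_right_mono) (auto simp flip: of_nat_power)
  finally have "c * real N ^ (S+1) \<le> real (card Gd) * real N + c/2 * real N ^ (S+1)"
    using sg by (simp add: algebra_simps)
  then have "c/2 * real N ^ S * real N \<le> real (card Gd) * real N"
    by (simp add: algebra_simps)
  then have cG: "c/2 * real N ^ S \<le> real (card Gd)" using N by simp
  have pm: "(c/2 * real N)^s = (c/2)^s * real N^s" by (rule power_mult_distrib)
  have "(c/2)^(s+1) * real N ^ (S+s) = (c/2 * real N ^ S) * (c/2 * real N)^s"
    unfolding pm by (simp add: power_add algebra_simps)
  also have "\<dots> \<le> real (card Gd) * (c/2 * real N)^s"
    using cG c by (intro mult_right_mono) auto
  also have "\<dots> = (\<Sum>h\<in>Gd. (c/2 * real N)^s)" by simp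
  also have "\<dots> \<le> (\<Sum>h\<in>Gd. real (g h) ^ s)"
    using c by (intro sum_mono power_mono) (auto simp: Gd_def)
  also have "\<dots> \<le> (\<Sum>h\<in>X. real (g h) ^ s)"
    using fX GX by (intro sum_mono2) auto
  finally show ?thesis by simp
qed

definition Dg :: "(nat \<Rightarrow> nat) \<Rightarrow> nat \<Rightarrow> (nat\<times>nat) set" where
  "Dg rep l = (\<lambda>P. (P, rep P)) ` {..<l}"

lemma vld_empty: "vld V E W {} = {\<lambda>_. undefined}"
  by (auto simp: vld_def)

lemma greedy:
  assumes fV: "finite V" and sym: "\<forall>u v. E u v \<longrightarrow> E v u" and L: "L \<ge> 0"
    and hyp: "\<forall>i<t. \<forall>h \<in> vld V E W (Dg rep i). real (card (Gs V E W (Dg rep i) i h)) \<ge> L"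
  shows "l \<le> t \<Longrightarrow> real (card (vld V E W (Dg rep l))) \<ge> L ^ l"
proof (induction l)
  case 0
  then show ?case by (simp add: Dg_def vld_empty)
next
  case (Suc l)
  have eq: "Dg rep (Suc l) = Dg rep l \<union> {l} \<times> {rep l}"
    by (auto simp: Dg_def lessThan_Suc)
  have "card (vld V E W (Dg rep (Suc l))) = (\<Sum>h\<in>vld V E W (Dg rep l). card (Gs V E W (Dg rep l) l h) ^ card {rep l})"
    unfolding eq by (rule decomp) (use fV sym in \<open>auto simp: Dg_def\<close>)
  then have "real (card (vld V E W (Dg rep (Suc l)))) = (\<Sum>h\<in>vld V E W (Dg rep l). real (card (Gs V E W (Dg rep l) l h)))"
    by simp
  also have "\<dots> \<ge> (\<Sum>h\<in>vld V E W (Dg rep l). L)"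
    using hyp Suc.prems by (intro sum_mono) auto
  finally have "real (card (vld V E W (Dg rep (Suc l)))) \<ge> real (card (vld V E W (Dg rep l))) * L"
    by simp
  moreover have "real (card (vld V E W (Dg rep l))) * L \<ge> L^l * L"
    using Suc L by (intro mult_right_mono) auto
  ultimately show ?case by (simp add: algebra_simps)
qed

definition Db :: "nat \<Rightarrow> (nat \<Rightarrow> nat set) \<Rightarrow> (nat \<Rightarrow> nat) \<Rightarrow> nat \<Rightarrow> (nat\<times>nat) set" where
  "Db t Af rep l = Sigma {..<l} Af \<union> (\<lambda>P. (P, rep P)) ` {l..<t}"

primrec cb :: "real \<Rightarrow> (nat \<Rightarrow> nat set) \<Rightarrow> nat \<Rightarrow> real" where
  "cb c0 Af 0 = c0"
| "cb c0 Af (Suc l) = (cb c0 Af l / 2) ^ (card (Af l) + 1)"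

lemma cb_pos: "c0 > 0 \<Longrightarrow> cb c0 Af l > 0"
  by (induction l) auto

lemma Gs_le: "finite V \<Longrightarrow> card (Gs V E W D i h) \<le> card V"
  unfolding Gs_def by (rule card_mono) auto

lemma blowup:
  assumes fV: "finite V" and N: "card V > 0" and sym: "\<forall>u v. E u v \<longrightarrow> E v u"
    and Af: "\<forall>P<t. rep P \<in> Af P \<and> finite (Af P)" and c0: "c0 > 0"
    and base: "real (card (vld V E W (Db t Af rep 0))) \<ge> c0 * real (card V) ^ card (Db t Af rep 0)"
  shows "l \<le> t \<Longrightarrow> real (card (vld V E W (Db t Af rep l))) \<ge> cb c0 Af l * real (card V) ^ card (Db t Af rep l)"
proof (induction l)
  case 0
  then show ?case using base by simp
next
  case (Suc l)
  define D0 where "D0 = Sigma {..<l} Af \<union> (\<lambda>P. (P, rep P)) ` {Suc l..<t}"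
  have fD0: "finite D0" unfolding D0_def using Af Suc.prems by (auto intro!: finite_SigmaI)
  have D0l: "\<forall>p\<in>D0. fst p \<noteq> l" by (auto simp: D0_def)
  have ins: "{l..<t} = insert l {Suc l..<t}" using Suc.prems by auto
  have e1: "Db t Af rep l = D0 \<union> {l} \<times> {rep l}"
    unfolding Db_def D0_def ins by auto
  have e2: "Db t Af rep (Suc l) = D0 \<union> {l} \<times> Af l"
    using Suc.prems by (auto simp: Db_def D0_def lessThan_Suc)
  have fA: "finite (Af l)" and rA: "rep l \<in> Af l" using Af Suc.prems by auto
  have c1: "card (Db t Af rep l) = card D0 + 1"
    unfolding e1 using fD0 D0l by (subst card_Un_disjoint) auto
  have c2: "card (Db t Af rep (Suc l)) = card D0 + card (Af l)"
    unfolding e2 using fD0 D0l fA by (subst card_Un_disjoint) (auto simp: card_cartesian_product)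
  have d1: "card (vld V E W (Db t Af rep l)) = (\<Sum>h\<in>vld V E W D0. card (Gs V E W D0 l h) ^ card {rep l})"
    unfolding e1 by (rule decomp) (use fV sym fD0 D0l in auto)
  have d2: "card (vld V E W (Db t Af rep (Suc l))) = (\<Sum>h\<in>vld V E W D0. card (Gs V E W D0 l h) ^ card (Af l))"
    unfolding e2 by (rule decomp) (use fV sym fD0 D0l fA in auto)
  have IH: "real (\<Sum>h\<in>vld V E W D0. card (Gs V E W D0 l h)) \<ge> cb c0 Af l * real (card V) ^ (card D0 + 1)"
    using Suc.IH Suc.prems d1 c1 by simp
  have cAf: "card (Af l) \<ge> 1" using fA rA by (metis One_nat_def card_0_eq empty_iff less_one not_le)
  have "real (\<Sum>h\<in>vld V E W D0. card (Gs V E W D0 l h) ^ card (Af l)) \<ge> (cb c0 Af l / 2) ^ (card (Af l) + 1) * real (card V) ^ (card D0 + card (Af l))"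
    by (rule markov[OF finite_vld[OF fD0 fV] N cb_pos[OF c0] cAf _ card_vld_le[OF fD0 fV] IH])
       (use Gs_le fV in auto)
  then show ?case using d2 c2 by simp
qed

lemma cn_bound:
  assumes fV: "finite V" and SV: "S \<subseteq> V" and nb: "\<forall>v\<in>V. real (card (V - {u\<in>V. E v u})) \<le> d"
  shows "real (card {u\<in>V. \<forall>s\<in>S. E s u}) \<ge> real (card V) - real (card S) * d"
proof -
  have fS: "finite S" using fV SV finite_subset by auto
  have eq: "V - {u\<in>V. \<forall>s\<in>S. E s u} = (\<Union>s\<in>S. V - {u\<in>V. E s u})" by auto
  have "card (V - {u\<in>V. \<forall>s\<in>S. E s u}) \<le> (\<Sum>s\<in>S. card (V - {u\<in>V. E s u}))"
    unfolding eq by (rule card_UN_le[OF fS])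
  then have "real (card (V - {u\<in>V. \<forall>s\<in>S. E s u})) \<le> real (\<Sum>s\<in>S. card (V - {u\<in>V. E s u}))"
    by (simp only: of_nat_le_iff)
  also have "\<dots> = (\<Sum>s\<in>S. real (card (V - {u\<in>V. E s u})))" by (rule of_nat_sum)
  also have "\<dots> \<le> (\<Sum>s\<in>S. d)" using nb SV by (intro sum_mono) auto
  also have "\<dots> = real (card S) * d" by simp
  finally have "real (card (V - {u\<in>V. \<forall>s\<in>S. E s u})) \<le> real (card S) * d" .
  moreover have "card (V - {u\<in>V. \<forall>s\<in>S. E s u}) = card V - card {u\<in>V. \<forall>s\<in>S. E s u}"
    using fV by (intro card_Diff_subset) auto
  moreover have "card {u\<in>V. \<forall>s\<in>S. E s u} \<le> card V" using fV by (intro card_mono) auto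
  ultimately show ?thesis by linarith
qed

definition AfS :: "nat \<Rightarrow> nat \<Rightarrow> nat \<Rightarrow> nat set" where
  "AfS t k P = (if P = t - 1 then {1..<k} else {..<k})"

definition repS :: "nat \<Rightarrow> nat \<Rightarrow> nat" where
  "repS t P = (if P = t - 1 then 1 else 0)"

definition WS :: "'a set \<Rightarrow> ('a\<Rightarrow>'a\<Rightarrow>bool) \<Rightarrow> nat \<Rightarrow> 'a \<Rightarrow> 'a \<Rightarrow> nat \<Rightarrow> 'a set" where
  "WS V E t x m P = (if P = t - 1 then {u\<in>V. E x u} else {u\<in>V. E x u \<and> E m u})"

lemma count_xm:
  fixes \<gamma> d :: real
  assumes G: "simple_graph V E" and N: "card V > 0" and t: "t \<ge> 1" and k: "k \<ge> 2"
    and nb: "\<forall>v\<in>V. real (card (V - {u\<in>V. E v u})) \<le> d" and d: "d \<ge> 0"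
    and td: "real t * d \<le> real (card V) - \<gamma> * real (card V)" and g: "\<gamma> > 0"
    and x: "x \<in> V" and m: "m \<in> V"
  shows "real (card (vld V E (WS V E t x m) (Db t (AfS t k) (repS t) t)))
           \<ge> cb (\<gamma>^t) (AfS t k) t * real (card V) ^ card (Db t (AfS t k) (repS t) t)"
proof -
  have fV: "finite V" using G by (simp add: simple_graph_def)
  have sym: "\<forall>u v. E u v \<longrightarrow> E v u" using G by (simp add: simple_graph_def)
  have inV: "\<And>u v. E u v \<Longrightarrow> v \<in> V" using G by (simp add: simple_graph_def)
  let ?W = "WS V E t x m"
  have hyp: "\<forall>i<t. \<forall>h \<in> vld V E ?W (Dg (repS t) i). real (card (Gs V E ?W (Dg (repS t) i) i h)) \<ge> \<gamma> * real (card V)"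
  proof (intro allI impI ballI)
    fix i h assume i: "i < t" and h: "h \<in> vld V E ?W (Dg (repS t) i)"
    define Ss where "Ss = h ` Dg (repS t) i \<union> {x} \<union> (if i = t - 1 then {} else {m})"
    have hV: "h ` Dg (repS t) i \<subseteq> V" using h by (auto simp: vld_def)
    have SV: "Ss \<subseteq> V" using hV x m by (auto simp: Ss_def)
    have cD: "card (h ` Dg (repS t) i) \<le> i"
      using card_image_le[of "Dg (repS t) i" h] card_image_le[of "{..<i}" "\<lambda>P. (P, repS t P)"]
      by (simp add: Dg_def)
    have cS: "card Ss \<le> t"
    proof (cases "i = t - 1")
      case True
      then have "card Ss \<le> card (h ` Dg (repS t) i) + card {x}"
        unfolding Ss_def using card_Un_le[of "h ` Dg (repS t) i" "{x}"] by simp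
      then show ?thesis using cD True t by simp
    next
      case False
      have "card Ss \<le> card (h ` Dg (repS t) i \<union> {x}) + card {m}"
        unfolding Ss_def using False card_Un_le[of "h ` Dg (repS t) i \<union> {x}" "{m}"] by simp
      also have "\<dots> \<le> card (h ` Dg (repS t) i) + card {x} + card {m}"
        using card_Un_le[of "h ` Dg (repS t) i" "{x}"] by simp
      finally have "card Ss \<le> card (h ` Dg (repS t) i) + card {x} + card {m}" .
      then show ?thesis using cD False i by simp
    qed
    have sub: "{u\<in>V. \<forall>s\<in>Ss. E s u} \<subseteq> Gs V E ?W (Dg (repS t) i) i h"
    proof
      fix u assume u: "u \<in> {u\<in>V. \<forall>s\<in>Ss. E s u}"
      then have uV: "u \<in> V" and ux: "E x u" and um: "i \<noteq> t - 1 \<Longrightarrow> E m u"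
        and uh: "\<forall>q\<in>Dg (repS t) i. E (h q) u" by (auto simp: Ss_def)
      have "\<forall>q\<in>Dg (repS t) i. E u (h q)" using uh sym by blast
      moreover have "u \<in> ?W i" using uV ux um by (auto simp: WS_def)
      ultimately show "u \<in> Gs V E ?W (Dg (repS t) i) i h" using uV by (simp add: Gs_def)
    qed
    have "real (card (Gs V E ?W (Dg (repS t) i) i h)) \<ge> real (card {u\<in>V. \<forall>s\<in>Ss. E s u})"
      using card_mono[OF _ sub] fV by (simp add: Gs_def)
    moreover have "real (card {u\<in>V. \<forall>s\<in>Ss. E s u}) \<ge> real (card V) - real (card Ss) * d"
      by (rule cn_bound[OF fV SV nb])
    moreover have "real (card Ss) * d \<le> real t * d" using cS d by (intro mult_right_mono) auto
    ultimately show "real (card (Gs V E ?W (Dg (repS t) i) i h)) \<ge> \<gamma> * real (card V)"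
      using td by linarith
  qed
  have gr: "real (card (vld V E ?W (Dg (repS t) t))) \<ge> (\<gamma> * real (card V)) ^ t"
    by (rule greedy[OF fV sym _ hyp]) (use g in auto)
  have D0: "Db t (AfS t k) (repS t) 0 = Dg (repS t) t" by (simp add: Db_def Dg_def atLeast0LessThan)
  have cD0: "card (Dg (repS t) t) = t"
    unfolding Dg_def by (subst card_image) (auto simp: inj_on_def)
  have base: "real (card (vld V E ?W (Db t (AfS t k) (repS t) 0))) \<ge> \<gamma>^t * real (card V) ^ card (Db t (AfS t k) (repS t) 0)"
    using gr unfolding D0 cD0 by (simp add: power_mult_distrib)
  show ?thesis
    by (rule blowup[OF fV N sym _ _ base]) (use k g in \<open>auto simp: AfS_def repS_def\<close>)
qed



definition idx :: "nat \<Rightarrow> nat \<Rightarrow> nat \<Rightarrow> nat \<times> nat" where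
  "idx k t v = (t - 1 - (v - 1) div k, (v - 1) mod k)"

definition vtx :: "nat \<Rightarrow> nat \<Rightarrow> nat \<times> nat \<Rightarrow> nat" where
  "vtx k t p = (t - 1 - fst p) * k + snd p + 1"

lemma Dfin_eq: "Db t Af rep t = Sigma {..<t} Af"
  by (simp add: Db_def)

lemma card_Dfin:
  assumes "t \<ge> 1" "k \<ge> 2"
  shows "card (Db t (AfS t k) (repS t) t) = t * k - 1"
proof -
  obtain t' where t: "t = Suc t'" using assms by (cases t) auto
  have "card (Db t (AfS t k) (repS t) t) = (\<Sum>P<t. card (AfS t k P))"
    unfolding Dfin_eq by (rule card_SigmaI) (auto simp: AfS_def)
  also have "\<dots> = (\<Sum>P<t'. k) + (k - 1)"
    unfolding t lessThan_Suc by (simp add: AfS_def)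
  also have "\<dots> = t * k - 1" using t assms by simp
  finally show ?thesis .
qed

lemma idx_in:
  assumes k: "k \<ge> 2" and t: "t \<ge> 1" and v: "2 \<le> v" "v \<le> t * k"
  shows "idx k t v \<in> Db t (AfS t k) (repS t) t"
proof -
  have "(v - 1) div k \<le> t - 1"
  proof -
    have "v - 1 < t * k" using v by simp
    then have "(v - 1) div k < t" using k by (simp add: div_less_iff_less_mult mult.commute)
    then show ?thesis by simp
  qed
  moreover have "(v - 1) mod k < k" using k by simp
  moreover have "(v - 1) div k = 0 \<Longrightarrow> 1 \<le> (v - 1) mod k"
  proof -
    assume "(v - 1) div k = 0"
    then have "v - 1 < k" using k by (simp add: div_eq_0_iff)
    then have "(v - 1) mod k = v - 1" by simp
    then show ?thesis using v by simp
  qed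
  ultimately show ?thesis using t
    by (auto simp: Dfin_eq idx_def AfS_def)
qed

lemma vtx_props:
  assumes k: "k \<ge> 2" and t: "t \<ge> 1" and p: "p \<in> Db t (AfS t k) (repS t) t"
  shows "2 \<le> vtx k t p" "vtx k t p \<le> t * k" "idx k t (vtx k t p) = p"
proof -
  obtain P a where pa: "p = (P, a)" by force
  have P: "P < t" and a: "a < k" and a1: "P = t - 1 \<Longrightarrow> 1 \<le> a"
    using p pa by (auto simp: Dfin_eq AfS_def split: if_splits)
  have v1: "vtx k t p - 1 = (t - 1 - P) * k + a" by (simp add: vtx_def pa)
  show "2 \<le> vtx k t p"
  proof (cases "P = t - 1")
    case True then show ?thesis using a1 by (simp add: vtx_def pa)
  next
    case False
    then have "t - 1 - P \<ge> 1" using P by simp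
    then have "(t - 1 - P) * k \<ge> 1 * k" by (intro mult_right_mono) auto
    then have h: "(t - 1 - P) * k \<ge> 1" using k by simp
    show ?thesis unfolding vtx_def pa snd_conv fst_conv using h by linarith
  qed
  have "(t - 1 - P) * k + a + 1 \<le> (t - 1) * k + k"
  proof -
    have "(t - 1 - P) * k \<le> (t - 1) * k" by (intro mult_right_mono) auto
    then show ?thesis using a by linarith
  qed
  also have "(t - 1) * k + k = t * k" using t by (cases t) auto
  finally show "vtx k t p \<le> t * k" by (simp add: vtx_def pa)
  have "(vtx k t p - 1) div k = t - 1 - P" unfolding v1 using a by simp
  moreover have "(vtx k t p - 1) mod k = a" unfolding v1 using a by simp
  ultimately show "idx k t (vtx k t p) = p" using P by (simp add: idx_def pa)
qed

lemma div_bound: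
  fixes k t v :: nat
  assumes k: "k \<ge> 2" and v: "v \<le> t * k"
  shows "(v - 1) div k \<le> t - 1"
proof -
  have "v - 1 < t * k \<or> t = 0"
  proof (cases "t = 0")
    case False
    then have "t * k > 0" using k by simp
    then show ?thesis using v by arith
  qed simp
  then show ?thesis
  proof
    assume "v - 1 < t * k"
    then have "(v - 1) div k < t" using k by (simp add: div_less_iff_less_mult mult.commute)
    then show ?thesis by simp
  qed (use v in simp)
qed

definition valc :: "nat \<Rightarrow> nat \<Rightarrow> 'a \<Rightarrow> 'a \<Rightarrow> ((nat\<times>nat)\<Rightarrow>'a) \<Rightarrow> nat \<Rightarrow> 'a" where
  "valc k t z m g u = (if u = 0 then z else if u = 1 then m else g (idx k t u))"

lemma copy_edge:
  assumes G: "simple_graph V E" and k: "k \<ge> 2" and t: "t \<ge> 1" and r: "r = t * k"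
    and g: "g \<in> vld V E (WS V E t z m) (Db t (AfS t k) (repS t) t)"
    and uv: "H1_adj r k u v"
  shows "E (valc k t z m g u) (valc k t z m g v)"
proof -
  have sym: "\<And>a b. E a b \<Longrightarrow> E b a" using G by (simp add: simple_graph_def)
  have u: "u \<le> r" and v: "v \<le> r" and part: "J1_part k u \<noteq> J1_part k v" and nn: "{u, v} \<noteq> {0, 1}"
    using uv by (auto simp: H1_adj_def J1_adj_def)
  have W: "\<And>w. 2 \<le> w \<Longrightarrow> w \<le> r \<Longrightarrow> g (idx k t w) \<in> WS V E t z m (fst (idx k t w))"
    using g idx_in[OF k t] r by (auto simp: vld_def)
  have Wz: "\<And>w. 2 \<le> w \<Longrightarrow> w \<le> r \<Longrightarrow> E z (g (idx k t w))"
  proof -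
    fix w assume "2 \<le> w" "w \<le> r"
    from W[OF this] show "E z (g (idx k t w))" by (simp add: WS_def split: if_splits)
  qed
  have Wm: "\<And>w. 2 \<le> w \<Longrightarrow> w \<le> r \<Longrightarrow> (w - 1) div k \<noteq> 0 \<Longrightarrow> E m (g (idx k t w))"
  proof -
    fix w assume w: "2 \<le> w" "w \<le> r" "(w - 1) div k \<noteq> 0"
    have "(w - 1) div k \<le> t - 1" using div_bound[OF k] w r by simp
    then have "fst (idx k t w) \<noteq> t - 1" using w by (simp add: idx_def)
    then show "E m (g (idx k t w))" using W[OF w(1,2)] by (simp add: WS_def)
  qed
  have Wuv: "\<And>w1 w2. 2 \<le> w1 \<Longrightarrow> w1 \<le> r \<Longrightarrow> 2 \<le> w2 \<Longrightarrow> w2 \<le> r \<Longrightarrow> (w1 - 1) div k \<noteq> (w2 - 1) div k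
      \<Longrightarrow> E (g (idx k t w1)) (g (idx k t w2))"
  proof -
    fix w1 w2 assume w: "2 \<le> w1" "w1 \<le> r" "2 \<le> w2" "w2 \<le> r" "(w1 - 1) div k \<noteq> (w2 - 1) div k"
    have "(w1 - 1) div k \<le> t - 1" "(w2 - 1) div k \<le> t - 1" using div_bound[OF k] w r by auto
    then have "t - 1 - (w1 - 1) div k \<noteq> t - 1 - (w2 - 1) div k" using w(5) by arith
    then have "fst (idx k t w1) \<noteq> fst (idx k t w2)" by (simp add: idx_def)
    moreover have "idx k t w1 \<in> Db t (AfS t k) (repS t) t" "idx k t w2 \<in> Db t (AfS t k) (repS t) t"
      using idx_in[OF k t] w r by auto
    ultimately show "E (g (idx k t w1)) (g (idx k t w2))" using g by (auto simp: vld_def)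
  qed
  show ?thesis
  proof (cases "u = 0")
    case True
    then have "v \<noteq> 0" "v \<noteq> 1" using part nn by (auto simp: J1_part_def)
    then show ?thesis using True Wz[of v] v by (simp add: valc_def)
  next
    case u0: False
    show ?thesis
    proof (cases "u = 1")
      case True
      have "v \<noteq> 0"
      proof
        assume "v = 0"
        then have "{u, v} = {0, 1}" using True by auto
        with nn show False by simp
      qed
      moreover have "v \<noteq> 1" using part True by (auto simp: J1_part_def)
      moreover have "(v - 1) div k \<noteq> 0" using part True \<open>v \<noteq> 0\<close> by (auto simp: J1_part_def split: if_splits)
      ultimately show ?thesis using True Wm[of v] v by (simp add: valc_def)
    next
      case u1: False
      show ?thesis
      proof (cases "v = 0")
        case True then show ?thesis using u0 u1 Wz[of u] u sym by (simp add: valc_def)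
      next
        case v0: False
        show ?thesis
        proof (cases "v = 1")
          case True
          moreover have "(u - 1) div k \<noteq> 0" using part True u0 by (auto simp: J1_part_def split: if_splits)
          ultimately show ?thesis using u0 u1 Wm[of u] u sym by (simp add: valc_def)
        next
          case False
          moreover have "(u - 1) div k \<noteq> (v - 1) div k" using part u0 v0 by (auto simp: J1_part_def)
          ultimately show ?thesis using u0 u1 v0 Wuv[of u v] u v by (simp add: valc_def)
        qed
      qed
    qed
  qed
qed



abbreviation HS2 where "HS2 r k \<equiv> [H1 r k, H1' r k]"

lemma verts_eq: "hpath_verts (HS2 r k) r = {(c,v). c < 2 \<and> v \<le> r \<and> \<not> (0 < c \<and> v = 1)}"
  by (auto simp: hpath_verts_def H1_def H1'_def nth_Cons' less_2_cases_iff)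

lemma rep_eq: "c < 2 \<Longrightarrow> hpath_rep (HS2 r k) (c, u) = (if 0 < c \<and> u = 1 then (0, 1) else (c, u))"
  by (auto simp: hpath_rep_def H1_def H1'_def nth_Cons' less_2_cases_iff)

lemma edge_imp:
  assumes "hpath_edge (HS2 r k) r a b"
  shows "\<exists>c<2. \<exists>u\<le>r. \<exists>v\<le>r. H1_adj r k u v \<and> a = (if 0 < c \<and> u = 1 then (0, 1) else (c, u))
           \<and> b = (if 0 < c \<and> v = 1 then (0, 1) else (c, v))"
proof -
  obtain c u v where c: "c < 2" and u: "u \<le> r" and v: "v \<le> r" and adj: "radj (HS2 r k ! c) u v"
    and a: "a = hpath_rep (HS2 r k) (c, u)" and b: "b = hpath_rep (HS2 r k) (c, v)"
  proof -
    have l: "length (HS2 r k) = 2" by simp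
    show ?thesis using assms that unfolding hpath_edge_def l by blast
  qed
  have "radj (HS2 r k ! c) = H1_adj r k" using c by (auto simp: H1_def H1'_def less_2_cases_iff)
  then show ?thesis using c u v adj a b rep_eq[OF c] by metis
qed

lemma ends: "hpath_end1 (HS2 r k) = (0, 0)" "hpath_end2 (HS2 r k) = (1, 0)"
  by (auto simp: hpath_end1_def hpath_end2_def H1_def H1'_def)

definition Phi :: "nat \<Rightarrow> nat \<Rightarrow> nat \<Rightarrow> 'a \<Rightarrow> 'a \<Rightarrow> 'a \<Rightarrow> ((nat\<times>nat)\<Rightarrow>'a) \<Rightarrow> ((nat\<times>nat)\<Rightarrow>'a) \<Rightarrow> (nat\<times>nat) \<Rightarrow> 'a" where
  "Phi r k t x y m f f' = (\<lambda>(c,v). if c < 2 \<and> v \<le> r \<and> \<not> (0 < c \<and> v = 1)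
      then (if c = 0 then valc k t x m f v else valc k t y m f' v) else undefined)"

lemma Phi_rep:
  assumes "c < 2" "u \<le> r"
  shows "Phi r k t x y m f f' (if 0 < c \<and> u = 1 then (0, 1) else (c, u))
         = (if c = 0 then valc k t x m f u else valc k t y m f' u)"
  using assms by (auto simp: Phi_def valc_def less_2_cases_iff)

lemma Phi_hom:
  assumes G: "simple_graph V E" and k: "k \<ge> 2" and t: "t \<ge> 1" and r: "r = t * k"
    and x: "x \<in> V" and y: "y \<in> V" and m: "m \<in> V"
    and f: "f \<in> vld V E (WS V E t x m) (Db t (AfS t k) (repS t) t)"
    and f': "f' \<in> vld V E (WS V E t y m) (Db t (AfS t k) (repS t) t)"
  shows "Phi r k t x y m f f' \<in> hpath_verts (HS2 r k) r \<rightarrow>\<^sub>E V"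
    and "\<forall>a b. hpath_edge (HS2 r k) r a b \<longrightarrow> E (Phi r k t x y m f f' a) (Phi r k t x y m f f' b)"
    and "Phi r k t x y m f f' (0, 0) = x" and "Phi r k t x y m f f' (1, 0) = y"
proof -
  have vV: "\<And>z g u. z \<in> V \<Longrightarrow> g \<in> vld V E (WS V E t z m) (Db t (AfS t k) (repS t) t) \<Longrightarrow> u \<le> r
      \<Longrightarrow> valc k t z m g u \<in> V"
  proof -
    fix z g u assume z: "z \<in> V" and g: "g \<in> vld V E (WS V E t z m) (Db t (AfS t k) (repS t) t)" and u: "u \<le> r"
    show "valc k t z m g u \<in> V"
    proof (cases "u \<ge> 2")
      case True
      then have "idx k t u \<in> Db t (AfS t k) (repS t) t" using idx_in[OF k t] u r by auto
      then show ?thesis using g True by (auto simp: valc_def vld_def)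
    next
      case False
      then show ?thesis using z m by (auto simp: valc_def)
    qed
  qed
  show "Phi r k t x y m f f' \<in> hpath_verts (HS2 r k) r \<rightarrow>\<^sub>E V"
    unfolding verts_eq using vV[OF x f] vV[OF y f'] by (auto simp: Phi_def PiE_def extensional_def)
  show "\<forall>a b. hpath_edge (HS2 r k) r a b \<longrightarrow> E (Phi r k t x y m f f' a) (Phi r k t x y m f f' b)"
  proof (intro allI impI)
    fix a b assume "hpath_edge (HS2 r k) r a b"
    then obtain c u v where c: "c < 2" and u: "u \<le> r" and v: "v \<le> r" and adj: "H1_adj r k u v"
      and a: "a = (if 0 < c \<and> u = 1 then (0, 1) else (c, u))" and b: "b = (if 0 < c \<and> v = 1 then (0, 1) else (c, v))"
      using edge_imp by blast
    show "E (Phi r k t x y m f f' a) (Phi r k t x y m f f' b)"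
      unfolding a b Phi_rep[OF c u] Phi_rep[OF c v]
      using copy_edge[OF G k t r f adj] copy_edge[OF G k t r f' adj] by simp
  qed
  show "Phi r k t x y m f f' (0, 0) = x" "Phi r k t x y m f f' (1, 0) = y"
    by (auto simp: Phi_def valc_def)
qed

lemma Phi_inj:
  assumes k: "k \<ge> 2" and t: "t \<ge> 1" and r: "r = t * k"
  shows "inj_on (\<lambda>(m, f, f'). Phi r k t x y m f f')
     (Sigma V (\<lambda>m. vld V E (WS V E t x m) (Db t (AfS t k) (repS t) t) \<times> vld V E (WS V E t y m) (Db t (AfS t k) (repS t) t)))"
proof (rule inj_onI)
  fix A B
  assume A: "A \<in> Sigma V (\<lambda>m. vld V E (WS V E t x m) (Db t (AfS t k) (repS t) t) \<times> vld V E (WS V E t y m) (Db t (AfS t k) (repS t) t))"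
    and B: "B \<in> Sigma V (\<lambda>m. vld V E (WS V E t x m) (Db t (AfS t k) (repS t) t) \<times> vld V E (WS V E t y m) (Db t (AfS t k) (repS t) t))"
    and eq: "(\<lambda>(m, f, f'). Phi r k t x y m f f') A = (\<lambda>(m, f, f'). Phi r k t x y m f f') B"
  obtain m f f' where A': "A = (m, f, f')" by (cases A) auto
  obtain m2 f2 f2' where B': "B = (m2, f2, f2')" by (cases B) auto
  let ?D = "Db t (AfS t k) (repS t) t"
  have e: "Phi r k t x y m f f' = Phi r k t x y m2 f2 f2'" using eq A' B' by simp
  have r1: "1 \<le> r" using k t r by (metis le_trans mult_le_mono one_le_numeral mult_1)
  have "m = m2" using fun_cong[OF e, of "(0,1)"] r1 by (simp add: Phi_def valc_def)
  moreover have "f = f2"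
  proof (rule PiE_ext)
    show "f \<in> ?D \<rightarrow>\<^sub>E V" "f2 \<in> ?D \<rightarrow>\<^sub>E V" using A B A' B' by (auto simp: vld_def)
    fix p assume p: "p \<in> ?D"
    note vp = vtx_props[OF k t p]
    show "f p = f2 p" using fun_cong[OF e, of "(0, vtx k t p)"] vp r by (simp add: Phi_def valc_def)
  qed
  moreover have "f' = f2'"
  proof (rule PiE_ext)
    show "f' \<in> ?D \<rightarrow>\<^sub>E V" "f2' \<in> ?D \<rightarrow>\<^sub>E V" using A B A' B' by (auto simp: vld_def)
    fix p assume p: "p \<in> ?D"
    note vp = vtx_props[OF k t p]
    show "f' p = f2' p" using fun_cong[OF e, of "(1, vtx k t p)"] vp r by (simp add: Phi_def valc_def)
  qed
  ultimately show "A = B" using A' B' by simp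
qed



lemma card_verts:
  assumes "r \<ge> 1"
  shows "card (hpath_verts (HS2 r k) r) = 2 * r + 1"
proof -
  have e: "hpath_verts (HS2 r k) r = {0} \<times> {..r} \<union> {1} \<times> ({..r} - {1})"
    unfolding verts_eq by (auto simp: less_2_cases_iff)
  have "card ({0::nat} \<times> {..r} \<union> {1} \<times> ({..r} - {1})) = card ({0::nat} \<times> {..r}) + card ({1::nat} \<times> ({..r} - {1}))"
    by (rule card_Un_disjoint) auto
  also have "\<dots> = (r + 1) + r" using assms by (simp add: card_cartesian_product)
  finally show ?thesis unfolding e by simp
qed

lemma bad_pair:
  assumes fVs: "finite Vs" and fV: "finite V" and z: "z \<in> Vs" and w: "w \<in> Vs" "w \<noteq> z"
    and p: "p1 \<in> Vs" "p2 \<in> Vs" "p1 \<noteq> p2" and zp: "z \<noteq> p1" "z \<noteq> p2"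
  shows "card {\<phi> \<in> Vs \<rightarrow>\<^sub>E V. \<phi> p1 = x \<and> \<phi> p2 = y \<and> \<phi> z = \<phi> w} \<le> card V ^ (card Vs - 3)"
proof -
  let ?B = "{\<phi> \<in> Vs \<rightarrow>\<^sub>E V. \<phi> p1 = x \<and> \<phi> p2 = y \<and> \<phi> z = \<phi> w}"
  let ?U = "Vs - {p1, p2, z}"
  have inj: "inj_on (\<lambda>\<phi>. restrict \<phi> ?U) ?B"
  proof (rule inj_onI)
    fix \<phi> \<psi> assume a: "\<phi> \<in> ?B" "\<psi> \<in> ?B" and e: "restrict \<phi> ?U = restrict \<psi> ?U"
    have eU: "\<And>s. s \<in> ?U \<Longrightarrow> \<phi> s = \<psi> s" using fun_cong[OF e] by (metis restrict_apply')
    have ew: "\<phi> w = \<psi> w"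
    proof (cases "w \<in> ?U")
      case True then show ?thesis using eU by blast
    next
      case False then have "w = p1 \<or> w = p2" using w by auto
      then show ?thesis using a by auto
    qed
    show "\<phi> = \<psi>"
    proof (rule PiE_ext)
      show "\<phi> \<in> Vs \<rightarrow>\<^sub>E V" "\<psi> \<in> Vs \<rightarrow>\<^sub>E V" using a by auto
      fix s assume s: "s \<in> Vs"
      show "\<phi> s = \<psi> s"
      proof (cases "s \<in> ?U")
        case True then show ?thesis using eU by blast
      next
        case False then have "s = p1 \<or> s = p2 \<or> s = z" using s by auto
        then show ?thesis using a ew by auto
      qed
    qed
  qed
  have "card ?B = card ((\<lambda>\<phi>. restrict \<phi> ?U) ` ?B)" using card_image[OF inj] by simp
  also have "\<dots> \<le> card (?U \<rightarrow>\<^sub>E V)"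
  proof (rule card_mono)
    show "finite (?U \<rightarrow>\<^sub>E V)" using fVs fV by (auto intro: finite_PiE)
    show "(\<lambda>\<phi>. restrict \<phi> ?U) ` ?B \<subseteq> ?U \<rightarrow>\<^sub>E V"
    proof
      fix g assume "g \<in> (\<lambda>\<phi>. restrict \<phi> ?U) ` ?B"
      then obtain \<phi> where g: "g = restrict \<phi> ?U" and ph: "\<phi> \<in> Vs \<rightarrow>\<^sub>E V" by auto
      have "\<forall>s\<in>?U. \<phi> s \<in> V" using ph by (auto simp: PiE_iff)
      then show "g \<in> ?U \<rightarrow>\<^sub>E V" unfolding g by (simp add: restrict_PiE_iff)
    qed
  qed
  also have "\<dots> = card V ^ card ?U" using fVs by (simp add: card_PiE)
  also have "card ?U = card Vs - 3"
  proof -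
    have "card ?U = card Vs - card {p1, p2, z}" using fVs p z by (intro card_Diff_subset) auto
    moreover have "card {p1, p2, z} = 3" using p zp by auto
    ultimately show ?thesis by simp
  qed
  finally show ?thesis .
qed

lemma noninj_bound:
  assumes fVs: "finite Vs" and fV: "finite V" and p: "p1 \<in> Vs" "p2 \<in> Vs" "p1 \<noteq> p2" and xy: "x \<noteq> y"
  shows "card {\<phi> \<in> Vs \<rightarrow>\<^sub>E V. \<phi> p1 = x \<and> \<phi> p2 = y \<and> \<not> inj_on \<phi> Vs} \<le> card Vs * card Vs * card V ^ (card Vs - 3)"
proof -
  define Bad where "Bad = (\<lambda>p q. {\<phi> \<in> Vs \<rightarrow>\<^sub>E V. \<phi> p1 = x \<and> \<phi> p2 = y \<and> p \<noteq> q \<and> \<phi> p = \<phi> q})"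
  have sub: "{\<phi> \<in> Vs \<rightarrow>\<^sub>E V. \<phi> p1 = x \<and> \<phi> p2 = y \<and> \<not> inj_on \<phi> Vs} \<subseteq> (\<Union>p\<in>Vs. \<Union>q\<in>Vs. Bad p q)"
    unfolding Bad_def inj_on_def by blast
  have fin: "finite {\<phi> \<in> Vs \<rightarrow>\<^sub>E V. P \<phi>}" for P
    by (rule finite_subset[of _ "Vs \<rightarrow>\<^sub>E V"]) (auto intro: finite_PiE fVs fV)
  have each: "card (Bad p q) \<le> card V ^ (card Vs - 3)" if pq: "p \<in> Vs" "q \<in> Vs" for p q
  proof (cases "p = q")
    case True then show ?thesis by (simp add: Bad_def)
  next
    case False
    show ?thesis
    proof (cases "p \<notin> {p1, p2}")
      case True
      have "Bad p q \<subseteq> {\<phi> \<in> Vs \<rightarrow>\<^sub>E V. \<phi> p1 = x \<and> \<phi> p2 = y \<and> \<phi> p = \<phi> q}" by (auto simp: Bad_def)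
      then have "card (Bad p q) \<le> card {\<phi> \<in> Vs \<rightarrow>\<^sub>E V. \<phi> p1 = x \<and> \<phi> p2 = y \<and> \<phi> p = \<phi> q}"
        by (rule card_mono[OF fin])
      also have "\<dots> \<le> card V ^ (card Vs - 3)"
        by (rule bad_pair) (use fVs fV pq False True p in auto)
      finally show ?thesis .
    next
      case pin: False
      show ?thesis
      proof (cases "q \<notin> {p1, p2}")
        case True
        have "Bad p q \<subseteq> {\<phi> \<in> Vs \<rightarrow>\<^sub>E V. \<phi> p1 = x \<and> \<phi> p2 = y \<and> \<phi> q = \<phi> p}" by (auto simp: Bad_def)
        then have "card (Bad p q) \<le> card {\<phi> \<in> Vs \<rightarrow>\<^sub>E V. \<phi> p1 = x \<and> \<phi> p2 = y \<and> \<phi> q = \<phi> p}"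
          by (rule card_mono[OF fin])
        also have "\<dots> \<le> card V ^ (card Vs - 3)"
          by (rule bad_pair) (use fVs fV pq False True p in auto)
        finally show ?thesis .
      next
        case False
        then have "Bad p q = {}" using pin \<open>p \<noteq> q\<close> xy by (auto simp: Bad_def)
        then show ?thesis by simp
      qed
    qed
  qed
  have "card {\<phi> \<in> Vs \<rightarrow>\<^sub>E V. \<phi> p1 = x \<and> \<phi> p2 = y \<and> \<not> inj_on \<phi> Vs} \<le> card (\<Union>p\<in>Vs. \<Union>q\<in>Vs. Bad p q)"
    by (rule card_mono[OF _ sub]) (use fVs fV in \<open>auto simp: Bad_def intro!: finite_PiE\<close>)
  also have "\<dots> \<le> (\<Sum>p\<in>Vs. card (\<Union>q\<in>Vs. Bad p q))" by (rule card_UN_le[OF fVs])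
  also have "\<dots> \<le> (\<Sum>p\<in>Vs. \<Sum>q\<in>Vs. card (Bad p q))" by (intro sum_mono card_UN_le[OF fVs])
  also have "\<dots> \<le> (\<Sum>p\<in>Vs. \<Sum>q\<in>Vs. card V ^ (card Vs - 3))" by (intro sum_mono each)
  also have "\<dots> = card Vs * card Vs * card V ^ (card Vs - 3)" by simp
  finally show ?thesis .
qed



theorem proposition6p6:
  fixes \<gamma> :: real and r k :: nat
  assumes "\<gamma> > 0" and "2 \<le> k" and "k \<le> r" and "k dvd r"
  shows "\<exists>\<beta>>0. \<exists>n0. \<forall>n\<ge>n0. \<forall>(V :: nat set) E.
           simple_graph V E \<and> card V = n \<and>
           (\<forall>v\<in>V. real (degree V E v) \<ge> (1 - real k / real r + \<gamma>) * real n)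
           \<longrightarrow> (\<forall>x\<in>V. \<forall>y\<in>V. x \<noteq> y \<longrightarrow> reachable V E [H1 r k, H1' r k] r \<beta> x y)"
proof -
  have g: "\<gamma> > 0" and k: "k \<ge> 2" using assms by auto
  define t where "t = r div k"
  have r: "r = t * k" using assms(4) unfolding t_def by (metis dvd_mult_div_cancel mult.commute)
  have t1: "t \<ge> 1"
  proof (rule ccontr)
    assume "\<not> t \<ge> 1"
    then have "t = 0" by simp
    then have "r = 0" using r by simp
    then show False using assms by simp
  qed
  have r1: "r \<ge> 1" using assms(2,3) by simp
  define c where "c = cb (\<gamma>^t) (AfS t k) t"
  have c: "c > 0" unfolding c_def using cb_pos g by simp
  define M where "M = 2 * r + 1"
  define n0 where "n0 = max 1 (nat \<lceil>2 * real M ^ 2 / c ^ 2\<rceil>)"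
  have main: "reachable V E [H1 r k, H1' r k] r (c^2/2) x y"
    if n: "n \<ge> n0" and G: "simple_graph V E" and cV: "card V = n"
      and deg: "\<forall>v\<in>V. real (degree V E v) \<ge> (1 - real k / real r + \<gamma>) * real n"
      and x: "x \<in> V" and y: "y \<in> V" and xy: "x \<noteq> y" for n V E x y
  proof -
    have n1: "n \<ge> 1" using n by (simp add: n0_def)
    have nM: "real n \<ge> 2 * real M ^ 2 / c ^ 2" using n by (simp add: n0_def)
    have fV: "finite V" using G by (simp add: simple_graph_def)
    have Npos: "card V > 0" using cV n1 by simp
    define d where "d = (1 / real t - \<gamma>) * real n"
    have kr: "real k / real r = 1 / real t" using r k by (simp add: field_simps)
    have nb: "\<forall>v\<in>V. real (card (V - {u\<in>V. E v u})) \<le> d"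
    proof
      fix v assume v: "v \<in> V"
      have "card (V - {u\<in>V. E v u}) = card V - card {u\<in>V. E v u}"
        using fV by (intro card_Diff_subset) auto
      moreover have "card {u\<in>V. E v u} \<le> card V" using fV by (intro card_mono) auto
      moreover have "real (card {u\<in>V. E v u}) \<ge> (1 - 1 / real t + \<gamma>) * real n"
        using deg v kr by (simp add: degree_def)
      ultimately show "real (card (V - {u\<in>V. E v u})) \<le> d" using cV unfolding d_def
        by (simp add: of_nat_diff algebra_simps)
    qed
    have d0: "d \<ge> 0"
    proof -
      have "real (card (V - {u\<in>V. E x u})) \<le> d" using nb x by blast
      moreover have "0 \<le> real (card (V - {u\<in>V. E x u}))" by (rule of_nat_0_le_iff)
      ultimately show ?thesis by linarith
    qed
    have td: "real t * d \<le> real (card V) - \<gamma> * real (card V)"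
    proof -
      have "real t * d = real n - real t * \<gamma> * real n" using t1 unfolding d_def by (simp add: field_simps)
      moreover have "real t * \<gamma> * real n \<ge> 1 * \<gamma> * real n" using t1 g
        by (intro mult_right_mono) auto
      ultimately show ?thesis using cV by simp
    qed
    let ?D = "Db t (AfS t k) (repS t) t"
    have cD: "card ?D = r - 1" using card_Dfin[OF t1 k] r by simp
    have cnt: "real (card (vld V E (WS V E t z m) ?D)) \<ge> c * real n ^ (r - 1)" if "z \<in> V" "m \<in> V" for z m
      using count_xm[OF G Npos t1 k nb d0 td g that] cD cV unfolding c_def by simp
    let ?Vs = "hpath_verts (HS2 r k) r"
    let ?Sig = "Sigma V (\<lambda>m. vld V E (WS V E t x m) ?D \<times> vld V E (WS V E t y m) ?D)"
    let ?HS = "{\<phi> \<in> ?Vs \<rightarrow>\<^sub>E V. (\<forall>a b. hpath_edge (HS2 r k) r a b \<longrightarrow> E (\<phi> a) (\<phi> b)) \<and> \<phi> (0,0) = x \<and> \<phi> (1,0) = y}"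
    let ?NI = "{\<phi> \<in> ?Vs \<rightarrow>\<^sub>E V. \<phi> (0,0) = x \<and> \<phi> (1,0) = y \<and> \<not> inj_on \<phi> ?Vs}"
    let ?Emb = "hpath_embeddings V E (HS2 r k) r x y"
    have fVs: "finite ?Vs" unfolding verts_eq
      by (rule finite_subset[of _ "{..<2} \<times> {..r}"]) auto
    have fin: "finite {\<phi> \<in> ?Vs \<rightarrow>\<^sub>E V. P \<phi>}" for P
      by (rule finite_subset[of _ "?Vs \<rightarrow>\<^sub>E V"]) (auto intro: finite_PiE fVs fV)
    have finEmb: "finite ?Emb" unfolding hpath_embeddings_def by (rule fin)
    have "card ?Sig \<le> card ?HS"
    proof (rule card_inj_on_le[OF Phi_inj[OF k t1 r]])
      show "(\<lambda>(m, f, f'). Phi r k t x y m f f') ` ?Sig \<subseteq> ?HS"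
        using Phi_hom[OF G k t1 r x y] by auto
      show "finite ?HS" by (rule fin)
    qed
    moreover have "real (card ?Sig) \<ge> c^2 * real n ^ (2 * r - 1)"
    proof -
      have "card ?Sig = (\<Sum>m\<in>V. card (vld V E (WS V E t x m) ?D) * card (vld V E (WS V E t y m) ?D))"
        by (subst card_SigmaI) (auto simp: card_cartesian_product fV finite_vld finite_SigmaI Dfin_eq AfS_def)
      then have "real (card ?Sig) = (\<Sum>m\<in>V. real (card (vld V E (WS V E t x m) ?D)) * real (card (vld V E (WS V E t y m) ?D)))"
        by simp
      also have "\<dots> \<ge> (\<Sum>m\<in>V. (c * real n ^ (r - 1)) * (c * real n ^ (r - 1)))"
        using cnt x y c by (intro sum_mono mult_mono) auto
      also have "(\<Sum>m\<in>V. (c * real n ^ (r - 1)) * (c * real n ^ (r - 1))) = c^2 * real n ^ (2 * r - 1)"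
      proof -
        have e: "2 * r - 1 = Suc ((r - 1) + (r - 1))" using r1 by arith
        show ?thesis using cV unfolding e by (simp add: power_add power2_eq_square algebra_simps)
      qed
      finally show ?thesis .
    qed
    moreover have "?HS \<subseteq> ?Emb \<union> ?NI"
      unfolding hpath_embeddings_def ends by auto
    then have "card ?HS \<le> card (?Emb \<union> ?NI)" by (intro card_mono) (use finEmb fin in auto)
    then have "card ?HS \<le> card ?Emb + card ?NI" using card_Un_le[of ?Emb ?NI] by linarith
    moreover have "card ?NI \<le> M * M * n ^ (2 * r - 2)"
    proof -
      have "card ?NI \<le> card ?Vs * card ?Vs * card V ^ (card ?Vs - 3)"
        by (rule noninj_bound[OF fVs fV _ _ _ xy]) (use r1 in \<open>auto simp: verts_eq\<close>)
      then show ?thesis using card_verts[OF r1, of k] cV unfolding M_def by simp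
    qed
    ultimately have A: "real (card ?Emb) \<ge> c^2 * real n ^ (2 * r - 1) - real M ^ 2 * real n ^ (2 * r - 2)"
    proof -
      assume a1: "card ?Sig \<le> card ?HS" and a2: "real (card ?Sig) \<ge> c^2 * real n ^ (2 * r - 1)"
        and a3: "card ?HS \<le> card ?Emb + card ?NI" and a4: "card ?NI \<le> M * M * n ^ (2 * r - 2)"
      have "real (card ?NI) \<le> real (M * M * n ^ (2 * r - 2))" using a4 by (simp only: of_nat_le_iff)
      also have "\<dots> = real M ^ 2 * real n ^ (2 * r - 2)" by (simp add: power2_eq_square)
      finally have "real (card ?NI) \<le> real M ^ 2 * real n ^ (2 * r - 2)" .
      moreover have "real (card ?Sig) \<le> real (card ?Emb) + real (card ?NI)" using a1 a3 by linarith
      ultimately show ?thesis using a2 by linarith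
    qed
    have B: "real M ^ 2 * real n ^ (2 * r - 2) \<le> c^2 / 2 * real n ^ (2 * r - 1)"
    proof -
      have "real M ^ 2 \<le> c^2 / 2 * real n" using nM c by (simp add: field_simps)
      then have "real M ^ 2 * real n ^ (2 * r - 2) \<le> c^2 / 2 * real n * real n ^ (2 * r - 2)"
        by (intro mult_right_mono) auto
      also have "\<dots> = c^2 / 2 * real n ^ (2 * r - 1)"
      proof -
        have e: "2 * r - 1 = Suc (2 * r - 2)" using r1 by arith
        show ?thesis unfolding e by simp
      qed
      finally show ?thesis .
    qed
    have "real (card ?Emb) \<ge> c^2 / 2 * real n ^ (2 * r - 1)" using A B by linarith
    then show ?thesis unfolding reachable_def using cV by (simp add: mult_2)
  qed
  show ?thesis
  proof (intro exI[of _ "c^2/2"] conjI exI[of _ n0] allI impI ballI)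
    show "0 < c^2/2" using c by simp
  next
    fix n V E x y
    assume n: "n0 \<le> n" and h: "simple_graph V E \<and> card V = n \<and> (\<forall>v\<in>V. real (degree V E v) \<ge> (1 - real k / real r + \<gamma>) * real n)"
      and xyz: "x \<in> V" "y \<in> V" "x \<noteq> y"
    from h have h1: "simple_graph V E" and h2: "card V = n" and h3: "\<forall>v\<in>V. real (degree V E v) \<ge> (1 - real k / real r + \<gamma>) * real n"
      by auto
    show "reachable V E [H1 r k, H1' r k] r (c^2/2) x y" by (rule main[OF n h1 h2 h3 xyz])
  qed
qed

end
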